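(* Let $p,g\in\mathbb{Q}[x]$ with $p$ irreducible in $\mathbb{Q}[x]$ and $p\nmid g$. Suppose there exist $N\in\mathbb{N}$, $\overline h_1,\dots,\overline h_N\in\mathbb{Q}[x]$ with $\deg\overline h_i<\deg p$, and $\omega_1,\dots,\omega_N\in\mathbb{Q}_{>0}$ such that $g\equiv\sum_{i=1}^N\omega_i\overline h_i^2\pmod p$. Then for every integer $e\ge1$ there exist $h_1,\dots,h_N\in\mathbb{Q}[x]$ with $\deg h_i<e\deg p$ such that $g\equiv\sum_{i=1}^N\omega_ih_i^2\pmod{p^e}$. *)

theory Defs
  imports "HOL-Computational_Algebra.Polynomial_Factorial"
begin

end

theory Submission
  imports Defs "HOL-Computational_Algebra.Field_as_Ring" "HOL-Computational_Algebra.Computational_Algebra"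
begin

lemma bez:
  fixes p g :: "rat poly"
  assumes "irreducible p" "\<not> p dvd g"
  shows "\<exists>u v. u * g + v * p = 1"
proof -
  have "prime_elem p" using assms(1) by (rule field_poly_irreducible_imp_prime)
  hence "coprime p g" using assms(2) by (rule prime_elem_imp_coprime)
  hence "gcd g p = 1" by (simp add: coprime_commute)
  thus ?thesis using bezout_coefficients_fst_snd[of g p] by metis
qed

lemma alg:
  fixes g S c k r u v p hh w :: "rat poly"
  assumes "S = g - c * r" "u * g + v * p = 1" "2 * hh = 1" "w = 1 + hh * c * (u * r)"
  shows "g - S * w^2 = c * (r * v * p) + c * c * (u * r^2 - hh^2 * S * (u*r)^2)"
  using assms by algebra

lemma lift:
  fixes p g :: "rat poly" and N :: nat and \<omega> :: "nat \<Rightarrow> rat"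
  assumes "irreducible p" "\<not> p dvd g"
    and "p dvd (g - (\<Sum>i=1..N. smult (\<omega> i) ((hbar i)^2)))"
  shows "e \<ge> 1 \<Longrightarrow> \<exists>h :: nat \<Rightarrow> rat poly. p ^ e dvd (g - (\<Sum>i=1..N. smult (\<omega> i) ((h i)^2)))"
proof (induction e rule: nat_induct_at_least)
  case base
  then show ?case using assms(3) by auto
next
  case (Suc e)
  obtain h where h: "p ^ e dvd (g - (\<Sum>i=1..N. smult (\<omega> i) ((h i)^2)))" using Suc.IH by blast
  obtain u v where uv: "u * g + v * p = 1" using bez[OF assms(1,2)] by blast
  define S where "S = (\<Sum>i=1..N. smult (\<omega> i) ((h i)^2))"
  define c where "c = p ^ e"
  obtain r where r: "g - S = c * r" using h unfolding S_def c_def by (auto elim: dvdE)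
  define hh :: "rat poly" where "hh = [:1/2:]"
  have hh2: "2 * hh = 1" unfolding hh_def by (simp add: numeral_poly)
  define w where "w = 1 + hh * c * (u * r)"
  have Sr: "S = g - c * r" using r by simp
  have eq: "g - S * w^2 = c * (r * v * p) + c * c * (u * r^2 - hh^2 * S * (u*r)^2)"
    by (rule alg[OF Sr uv hh2 w_def])
  have sumeq: "(\<Sum>i=1..N. smult (\<omega> i) ((h i * w)^2)) = S * w^2"
    unfolding S_def by (simp add: power_mult_distrib sum_distrib_right mult_smult_left)
  have pc: "p dvd c" unfolding c_def using Suc.hyps by (simp add: dvd_power)
  have d1: "p ^ Suc e dvd c * (r * v * p)" unfolding c_def by simp
  have d2: "p ^ Suc e dvd c * c * (u * r^2 - hh^2 * S * (u*r)^2)"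
    using pc unfolding c_def by (simp add: mult_dvd_mono mult.assoc)
  have "p ^ Suc e dvd (g - S * w^2)" unfolding eq using d1 d2 by (rule dvd_add)
  thus ?case using sumeq by (intro exI[of _ "\<lambda>i. h i * w"]) simp
qed

theorem mainTheorem7:
  fixes p g :: "rat poly" and N :: nat and hbar :: "nat \<Rightarrow> rat poly" and \<omega> :: "nat \<Rightarrow> rat"
  assumes "irreducible p"
    and "\<not> p dvd g"
    and "\<forall>i\<in>{1..N}. degree (hbar i) < degree p"
    and "\<forall>i\<in>{1..N}. \<omega> i > 0"
    and "p dvd (g - (\<Sum>i=1..N. smult (\<omega> i) ((hbar i)^2)))"
  shows "\<forall>e::nat. e \<ge> 1 \<longrightarrow> (\<exists>h :: nat \<Rightarrow> rat poly.
           (\<forall>i\<in>{1..N}. degree (h i) < e * degree p) \<and>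
           p ^ e dvd (g - (\<Sum>i=1..N. smult (\<omega> i) ((h i)^2))))"
proof (intro allI impI)
  fix e :: nat assume e: "e \<ge> 1"
  obtain h where h: "p ^ e dvd (g - (\<Sum>i=1..N. smult (\<omega> i) ((h i)^2)))"
    using lift[OF assms(1,2,5) e] by blast
  have p0: "p \<noteq> 0" using assms(1) by auto
  have dp: "degree p \<ge> 1"
  proof (rule ccontr)
    assume "\<not> degree p \<ge> 1"
    then have "degree p = 0" by simp
    then have "is_unit p" using p0 by (simp add: is_unit_iff_degree)
    thus False using assms(1) by (simp add: irreducible_def)
  qed
  define q where "q = p ^ e"
  have q0: "q \<noteq> 0" using p0 unfolding q_def by simp
  have dq: "degree q = e * degree p" unfolding q_def by (simp add: degree_power_eq p0)
  define h' where "h' = (\<lambda>i. h i mod q)"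
  have deg: "\<forall>i\<in>{1..N}. degree (h' i) < e * degree p"
  proof
    fix i
    have pos: "0 < e * degree p" using dp e by simp
    from degree_mod_less[OF q0, of "h i"] show "degree (h' i) < e * degree p"
      unfolding h'_def dq using pos by auto
  qed
  have each: "q dvd smult (\<omega> i) ((h i)^2) - smult (\<omega> i) ((h' i)^2)" for i
  proof -
    have "q dvd h i - h' i" unfolding h'_def by (simp add: mod_eq_dvd_iff minus_mod_eq_mult_div[symmetric])
    hence "q dvd (h i - h' i) * (h i + h' i)" by simp
    hence "q dvd (h i)^2 - (h' i)^2" by (simp add: power2_eq_square algebra_simps)
    hence "q dvd smult (\<omega> i) ((h i)^2 - (h' i)^2)" by (simp add: smult_dvd_iff dvd_smult)
    thus ?thesis by (simp add: smult_diff_right)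
  qed
  have "q dvd (\<Sum>i=1..N. smult (\<omega> i) ((h i)^2) - smult (\<omega> i) ((h' i)^2))"
    by (rule dvd_sum) (rule each)
  hence "q dvd (\<Sum>i=1..N. smult (\<omega> i) ((h i)^2)) - (\<Sum>i=1..N. smult (\<omega> i) ((h' i)^2))"
    by (simp add: sum_subtractf)
  with h have "q dvd (g - (\<Sum>i=1..N. smult (\<omega> i) ((h i)^2))) + ((\<Sum>i=1..N. smult (\<omega> i) ((h i)^2)) - (\<Sum>i=1..N. smult (\<omega> i) ((h' i)^2)))"
    unfolding q_def by (rule dvd_add)
  hence "q dvd (g - (\<Sum>i=1..N. smult (\<omega> i) ((h' i)^2)))" by simp
  thus "\<exists>h. (\<forall>i\<in>{1..N}. degree (h i) < e * degree p) \<and> p ^ e dvd (g - (\<Sum>i=1..N. smult (\<omega> i) ((h i)^2)))"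
    using deg unfolding q_def by blast
qed

end
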